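(* Let $A$ be a Banach algebra and let $J$ be a right ideal in $A$ which is dense in $A$ for the norm topology. Then $J$ is quasi-directly finite if and only if $A$ is quasi-directly finite.
   Context: For $a,b$ in a ring $R$ (not necessarily unital), $a\diamond b := a+b-ab$; if $a\diamond b=0$ then $a$ is a left quasi-inverse of $b$ and $b$ a right quasi-inverse of $a$. A ring $R$ is quasi-directly finite if every element having a left quasi-inverse in $R$ also has a right quasi-inverse in $R$ (equivalently, $a\diamond b=0$ implies $b\diamond a=0$ for all $a,b\in R$). Here $J$ is regarded as a ring with the operations inherited from $A$. *)

theory Defs
  imports "HOL-Analysis.Analysis"
begin

definition qop :: "'a::ring \<Rightarrow> 'a \<Rightarrow> 'a" where
  "qop a b = a + b - a * b"

definition quasi_directly_finite_on :: "'a::ring set \<Rightarrow> bool" where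
  "quasi_directly_finite_on S \<longleftrightarrow>
     (\<forall>a\<in>S. (\<exists>b\<in>S. qop b a = 0) \<longrightarrow> (\<exists>c\<in>S. qop a c = 0))"

definition right_ideal :: "'a::ring set \<Rightarrow> bool" where
  "right_ideal J \<longleftrightarrow> 0 \<in> J \<and> (\<forall>x\<in>J. \<forall>y\<in>J. x + y \<in> J) \<and> (\<forall>x\<in>J. - x \<in> J)
     \<and> (\<forall>x\<in>J. \<forall>a. x * a \<in> J)"

end

theory Submission
  imports Defs
begin

lemma qop_assoc: "qop (qop a b) c = qop a (qop b c)"
  by (simp add: qop_def algebra_simps)

lemma qop0r: "qop a 0 = a" and qop0l: "qop 0 a = a"
  by (simp_all add: qop_def)

lemma rinv_in:
  assumes J: "right_ideal J" and y: "y \<in> J" and e: "qop y x = 0"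
  shows "x \<in> J"
proof -
  have "x = y * x + (- y)" using e by (simp add: qop_def algebra_simps)
  moreover have "y * x \<in> J" "- y \<in> J" using J y by (auto simp: right_ideal_def)
  ultimately show ?thesis using J by (metis right_ideal_def)
qed

fun pw :: "'a::real_normed_algebra \<Rightarrow> nat \<Rightarrow> 'a" where
  "pw w 0 = w" | "pw w (Suc n) = w * pw w n"

lemma pw_comm: "pw w n * w = w * pw w n"
  by (induction n) (simp_all add: mult.assoc)

lemma norm_pw: "norm (pw w n) \<le> norm w ^ Suc n"
proof (induction n)
  case (Suc n)
  have "norm (pw w (Suc n)) \<le> norm w * norm (pw w n)" by (simp add: norm_mult_ineq)
  also have "\<dots> \<le> norm w * norm w ^ Suc n" using Suc by (simp add: mult_left_mono)
  finally show ?case by simp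
qed simp

lemma neumann:
  fixes w :: "'a::{real_normed_algebra, banach}"
  assumes "norm w \<le> 1/2"
  shows "\<exists>w'. qop w w' = 0 \<and> qop w' w = 0 \<and> norm w' \<le> 1"
proof -
  have g: "summable (\<lambda>n. norm w ^ Suc n)"
    using assms by (simp add: summable_geometric summable_mult)
  have sn: "summable (\<lambda>n. norm (pw w n))"
    by (rule summable_norm_comparison_test[OF _ g]) (use norm_pw[of w] in blast)
  hence sm: "summable (pw w)" by (rule summable_norm_cancel)
  define s where "s = suminf (pw w)"
  have S: "pw w sums s" using sm s_def by (simp add: summable_sums)
  have "(\<lambda>n. pw w (Suc n)) sums (s - pw w 0)"
    using S sums_Suc_iff by (metis diff_add_cancel)
  moreover have "(\<lambda>n. pw w (Suc n)) sums (w * s)"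
    using sums_mult[OF S, of w] by simp
  ultimately have ws: "w * s = s - w" using sums_unique2 by fastforce
  have "(\<lambda>n. pw w (Suc n)) sums (s * w)"
    using sums_mult2[OF S, of w] by (simp add: pw_comm)
  with \<open>(\<lambda>n. pw w (Suc n)) sums (s - pw w 0)\<close> have sw: "s * w = s - w"
    using sums_unique2 by fastforce
  have h: "(\<lambda>n. (1/2::real) ^ Suc n) sums 1"
    using sums_mult[OF geometric_sums[of "1/2::real"], of "1/2"] by simp
  have "norm s \<le> (\<Sum>n. norm (pw w n))" unfolding s_def using sn by (rule summable_norm)
  also have "\<dots> \<le> (\<Sum>n. (1/2::real) ^ Suc n)"
  proof (rule suminf_le)
    fix n
    have "norm (pw w n) \<le> norm w ^ Suc n" by (rule norm_pw)
    also have "\<dots> \<le> (1/2) ^ Suc n" using assms by (intro power_mono) auto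
    finally show "norm (pw w n) \<le> (1/2) ^ Suc n" .
  qed (use sn h in \<open>auto simp: sums_iff\<close>)
  also have "\<dots> = 1" using h by (simp add: sums_iff)
  finally have "norm s \<le> 1" .
  show ?thesis
    by (rule exI[of _ "- s"]) (simp add: qop_def ws sw \<open>norm s \<le> 1\<close>)
qed

theorem proposition2p8:
  fixes J :: "'a::{real_normed_algebra, banach} set"
  assumes "right_ideal J"
    and "closure J = UNIV"
  shows "quasi_directly_finite_on J \<longleftrightarrow> quasi_directly_finite_on (UNIV :: 'a set)"
proof
  assume A: "quasi_directly_finite_on (UNIV :: 'a set)"
  show "quasi_directly_finite_on J"
    unfolding quasi_directly_finite_on_def
  proof (intro ballI impI)
    fix a assume a: "a \<in> J" and "\<exists>b\<in>J. qop b a = 0"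
    then obtain c where c: "qop a c = 0" using A unfolding quasi_directly_finite_on_def by blast
    then show "\<exists>c\<in>J. qop a c = 0" using rinv_in[OF assms(1) a c] by blast
  qed
next
  assume QJ: "quasi_directly_finite_on J"
  show "quasi_directly_finite_on (UNIV :: 'a set)"
    unfolding quasi_directly_finite_on_def
  proof (intro ballI impI)
    fix a :: 'a assume "\<exists>b\<in>UNIV. qop b a = 0"
    then obtain b where ba: "qop b a = 0" by blast
    define \<epsilon> where "\<epsilon> = 1 / (4 * (1 + norm a))"
    have na0: "1 + norm a \<noteq> 0" using norm_ge_zero[of a] by linarith
    have na2: "2 + 2 * norm a = 2 * (1 + norm a)" by simp
    have ep: "\<epsilon> > 0" unfolding \<epsilon>_def by (simp add: add_pos_nonneg)
    have "b \<in> closure J" using assms(2) by simp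
    then obtain y where yJ: "y \<in> J" and dy: "dist y b < \<epsilon>"
      using ep closure_approachable by blast
    define d where "d = b - y"
    have nd: "norm d < \<epsilon>" using dy by (simp add: d_def dist_norm norm_minus_commute)
    define w where "w = qop y a"
    have w_eq: "w = - d + d * a" using ba unfolding w_def d_def qop_def
      by (simp add: algebra_simps)
    have "norm w \<le> norm d * (1 + norm a)"
    proof -
      have "norm w \<le> norm (- d) + norm (d * a)" unfolding w_eq by (rule norm_triangle_ineq)
      also have "\<dots> \<le> norm d + norm d * norm a" using norm_mult_ineq[of d a] by simp
      finally show ?thesis by (simp add: algebra_simps)
    qed
    also have "\<dots> \<le> \<epsilon> * (1 + norm a)" using nd by (intro mult_right_mono) auto
    also have "\<dots> = 1/4" unfolding \<epsilon>_def
      using na0 by simp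
    finally have nw: "norm w \<le> 1/2" by simp
    then obtain w' where w1: "qop w w' = 0" and nw': "norm w' \<le> 1"
      using neumann by blast
    define x where "x = qop a w'"
    have yx: "qop y x = 0" using w1 by (simp add: x_def w_def qop_assoc[symmetric])
    have xJ: "x \<in> J" by (rule rinv_in[OF assms(1) yJ yx])
    obtain c where cJ: "c \<in> J" and xc: "qop x c = 0"
      using QJ xJ yJ yx unfolding quasi_directly_finite_on_def by blast
    have "y = qop y (qop x c)" using xc by (simp add: qop0r)
    also have "\<dots> = c" by (simp add: qop_assoc[symmetric] yx qop0l)
    finally have "y = c" .
    hence xy: "qop x y = 0" using xc by simp
    define z where "z = d - x * d"
    have yx': "y * x = y + x" using yx unfolding qop_def by (simp add: algebra_simps)
    have bz: "b = qop y z"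
    proof -
      have "y * (x * d) = x * d + y * d"
        by (simp add: mult.assoc[symmetric] yx' distrib_right)
      thus ?thesis unfolding z_def d_def qop_def by (simp add: algebra_simps)
    qed
    have nx: "norm x \<le> 2 * norm a + 1"
    proof -
      have "norm x \<le> norm (a + w') + norm (a * w')"
        unfolding x_def qop_def by (rule norm_triangle_ineq4)
      also have "\<dots> \<le> norm a + norm w' + norm (a * w')"
        using norm_triangle_ineq[of a w'] by simp
      also have "norm (a * w') \<le> norm a * norm w'" by (rule norm_mult_ineq)
      also have "norm a * norm w' \<le> norm a * 1" using nw' by (intro mult_left_mono) auto
      finally show ?thesis using nw' by simp
    qed
    have "norm z \<le> norm d + norm (x * d)"
      unfolding z_def by (rule norm_triangle_ineq4)
    also have "\<dots> \<le> norm d + norm x * norm d" using norm_mult_ineq[of x d] by simp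
    also have "norm d + norm x * norm d = norm d * (1 + norm x)" by (simp add: algebra_simps)
    also have "\<dots> \<le> \<epsilon> * (2 + 2 * norm a)" using nd nx ep
      by (intro mult_mono) auto
    also have "\<dots> = 1/2" unfolding \<epsilon>_def
      using na0 na2 by simp
    finally obtain z' where z1: "qop z z' = 0" and z2: "qop z' z = 0"
      using neumann by blast
    define L where "L = qop z' x"
    have Lb: "qop L b = 0"
      unfolding L_def bz by (simp add: qop_assoc qop_assoc[symmetric, of x y z] xy qop0l z2)
    have "L = qop L (qop b a)" using ba by (simp add: qop0r)
    also have "\<dots> = a" by (simp add: qop_assoc[symmetric] Lb qop0l)
    finally have "L = a" .
    hence "qop a b = 0" using Lb by simp
    thus "\<exists>c\<in>UNIV. qop a c = 0" by blast
  qed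
qed

end
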